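(* Let $D$ be a $G$-invariant domain in $\Xi^+$. Then $W^0\cdot(\mathcal D^{\llcorner})^+=\mathcal D^{\llcorner}_\circ$.
   Context: $G$ is a connected, non-compact, real simple Lie group contained in its universal complexification $G^{\mathbb C}$; $K$ maximal compact, $G/K$ an irreducible Hermitian symmetric space of non-compact type, $\theta$ the Cartan involution, $\mathfrak g=\mathfrak k\oplus\mathfrak p$, $\mathfrak a\subset\mathfrak p$ maximal abelian, $r=\dim\mathfrak a$, $\mathfrak g^\alpha$ restricted root spaces, $e_1,\dots,e_r$ a basis of $\mathfrak a^*$ with restricted roots of type $C_r$ ($\pm2e_j,\pm e_j\pm e_k$) or $BC_r$ (additionally $\pm e_j$). $Z_0$ is the central element of $\mathfrak k$ defining the complex structure; $E_j\in\mathfrak g^{2e_j}$ with $A_j=[\theta E_j,E_j]$, $[A_j,E_j]=2E_j$, $[Z_0,E_j-\theta E_j]=A_j$, $[Z_0,A_j]=-(E_j-\theta E_j)$. $\Lambda_r=\mathrm{span}_{\mathbb R}\{E_j\}$, $\Lambda_r^{\llcorner}=\{\sum x_jE_j:x_j\ge0\}$. $W_K(\Lambda_r)=N_K(\Lambda_r)/Z_K(\Lambda_r)$ acts on $\Lambda_r$ by permutations of the $E_j$ and is generated by the reflections $\gamma_{k\,k+1}$ ($1\le k\le r-1$) swapping the $k$-th and $(k+1)$-th coordinates. $x_0=eK^{\mathbb C}\in G^{\mathbb C}/K^{\mathbb C}$, $\Xi^+=G\exp(i\{\sum x_jE_j:x_j>-1\})\cdot x_0$. For $D$: $\mathcal D^{\llcorner}=\{X\in\Lambda_r^{\llcorner}:\exp(iX)\cdot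 x_0\in D\}$ (a $W_K(\Lambda_r)$-invariant open subset of $\Lambda_r^{\llcorner}$); $(\mathcal D^{\llcorner})^+=\mathcal D^{\llcorner}\cap\{\sum x_jE_j:x_1\ge x_2\ge\dots\ge x_r\ge0\}$ (which is connected); $\mathcal D^{\llcorner}_\circ$ is the connected component of $\mathcal D^{\llcorner}$ containing $(\mathcal D^{\llcorner})^+$. $\Gamma^0$ is the set of those $\gamma_{k\,k+1}$ whose fixed-point hyperplane contains a non-zero element of $(\mathcal D^{\llcorner})^+$, and $W^0$ is the subgroup of $W_K(\Lambda_r)$ generated by $\Gamma^0$. *)

theory Defs
  imports "HOL-Analysis.Analysis" "HOL-Combinatorics.Permutations"
begin

text \<open>Coordinates: X = sum_j x_j E_j in Lambda_r is represented by the function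
  x :: nat => real with x j the coefficient of E_(j+1) (0-indexed, j < r),
  and x j = 0 for j >= r.  The topology on nat => real is the product topology,
  which on these extensional functions is the Euclidean topology of R^r.\<close>

definition Lambda_r :: "nat \<Rightarrow> (nat \<Rightarrow> real) set" where
  "Lambda_r r = {x. \<forall>j\<ge>r. x j = 0}"

definition Lambda_corner :: "nat \<Rightarrow> (nat \<Rightarrow> real) set" where
  "Lambda_corner r = {x. (\<forall>j<r. 0 \<le> x j) \<and> (\<forall>j\<ge>r. x j = 0)}"

text \<open>Action of W_K(Lambda_r) = permutations of the E_j.\<close>
definition Wact :: "(nat \<Rightarrow> nat) \<Rightarrow> (nat \<Rightarrow> real) \<Rightarrow> (nat \<Rightarrow> real)" where
  "Wact \<sigma> x = x \<circ> inv \<sigma>"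

definition WK :: "nat \<Rightarrow> (nat \<Rightarrow> nat) set" where
  "WK r = {\<sigma>. \<sigma> permutes {..<r}}"

text \<open>gamma_(k,k+1) (1-indexed in the paper) is the swap of 0-indexed coordinates k-1, k.
  Here gamma k swaps 0-indexed coordinates k and k+1, for k+1 < r.\<close>
definition gamma :: "nat \<Rightarrow> nat \<Rightarrow> nat" where
  "gamma k = Transposition.transpose k (Suc k)"

definition plus_part :: "nat \<Rightarrow> (nat \<Rightarrow> real) set \<Rightarrow> (nat \<Rightarrow> real) set" where
  "plus_part r U = U \<inter> {x. (\<forall>j. Suc j < r \<longrightarrow> x (Suc j) \<le> x j) \<and> (\<forall>j<r. 0 \<le> x j)}"

definition Gamma0 :: "nat \<Rightarrow> (nat \<Rightarrow> real) set \<Rightarrow> nat set" where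
  "Gamma0 r U = {k. Suc k < r \<and> (\<exists>x\<in>plus_part r U. (\<exists>j<r. x j \<noteq> 0) \<and> Wact (gamma k) x = x)}"

text \<open>W^0: subgroup of W_K(Lambda_r) generated by Gamma^0 (finite group, so
  closure under composition with generators starting from id suffices).\<close>
inductive_set W0 :: "nat \<Rightarrow> (nat \<Rightarrow> real) set \<Rightarrow> (nat \<Rightarrow> nat) set"
  for r :: nat and U :: "(nat \<Rightarrow> real) set" where
  W0_id: "id \<in> W0 r U"
| W0_step: "\<sigma> \<in> W0 r U \<Longrightarrow> k \<in> Gamma0 r U \<Longrightarrow> \<sigma> \<circ> gamma k \<in> W0 r U"

end

theory Submission
  imports Defs
begin

definition Ch :: "nat \<Rightarrow> (nat \<Rightarrow> real) set" where
  "Ch r = {x. (\<forall>j. Suc j < r \<longrightarrow> x (Suc j) \<le> x j) \<and> (\<forall>j<r. 0 \<le> x j)}"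

lemma plus_part_Ch: "plus_part r U = U \<inter> Ch r"
  by (simp add: plus_part_def Ch_def)

lemma Ch_mono: assumes "x \<in> Ch r" "i \<le> j" "j < r" shows "x j \<le> x i"
  using assms(2,3)
proof (induction j)
  case 0 then show ?case by simp
next
  case (Suc j)
  show ?case
  proof (cases "i = Suc j")
    case True then show ?thesis by simp
  next
    case False
    then have "i \<le> j" using Suc by simp
    then have "x j \<le> x i" using Suc by simp
    moreover have "x (Suc j) \<le> x j" using assms(1) Suc unfolding Ch_def by auto
    ultimately show ?thesis by simp
  qed
qed

lemma sort_unique_aux:
  assumes p: "p \<in> Ch r" and q: "q \<in> Ch r" and tau: "\<tau> permutes {..<r}"
    and eq: "\<And>i. i < r \<Longrightarrow> q i = p (\<tau> i)" and i: "i < r"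
  shows "\<not> p i < q i"
proof
  assume lt: "p i < q i"
  define t where "t = q i"
  define Sq where "Sq = {j. j < r \<and> t \<le> q j}"
  define Sp where "Sp = {j. j < r \<and> t \<le> p j}"
  have "\<tau> ` Sq \<subseteq> Sp"
  proof
    fix z assume "z \<in> \<tau> ` Sq"
    then obtain j where j: "j \<in> Sq" "z = \<tau> j" by auto
    have "\<tau> j < r" using j tau permutes_in_image[OF tau] unfolding Sq_def by auto
    then show "z \<in> Sp" using j eq unfolding Sq_def Sp_def by auto
  qed
  moreover have "inj_on \<tau> Sq" using permutes_inj[OF tau] by (auto intro: inj_on_subset)
  moreover have "finite Sp" unfolding Sp_def by auto
  ultimately have c1: "card Sq \<le> card Sp"
    by (metis card_image card_mono)
  have "{..i} \<subseteq> Sq" unfolding Sq_def t_def using i Ch_mono[OF q] by auto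
  then have c2: "Suc i \<le> card Sq" using card_mono[of Sq "{..i}"] unfolding Sq_def by auto
  have "Sp \<subseteq> {..<i}"
  proof
    fix j assume "j \<in> Sp"
    then have j: "j < r" "t \<le> p j" unfolding Sp_def by auto
    show "j \<in> {..<i}"
    proof (rule ccontr)
      assume "j \<notin> {..<i}"
      then have "p j \<le> p i" using Ch_mono[OF p] j by auto
      then show False using j lt t_def by simp
    qed
  qed
  then have "card Sp \<le> i" using card_mono[of "{..<i}" Sp] by auto
  then show False using c1 c2 by simp
qed

lemma sort_unique:
  assumes p: "p \<in> Ch r" and q: "q \<in> Ch r" and tau: "\<tau> permutes {..<r}"
    and eq: "\<And>i. i < r \<Longrightarrow> q i = p (\<tau> i)" and i: "i < r"
  shows "p i = q i"
proof -
  have a: "\<not> p i < q i" using sort_unique_aux[OF p q tau eq i] .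
  have tau': "inv \<tau> permutes {..<r}" using permutes_inv[OF tau] .
  have eq': "\<And>i. i < r \<Longrightarrow> p i = q (inv \<tau> i)"
  proof -
    fix i assume "i < r"
    then have "inv \<tau> i < r" using permutes_in_image[OF tau'] by auto
    then show "p i = q (inv \<tau> i)" using eq permutes_inverses(1)[OF tau] by auto
  qed
  have "\<not> q i < p i" using sort_unique_aux[OF q p tau' eq' i] .
  with a show ?thesis by simp
qed

lemma W0_comp: "\<tau> \<in> W0 r U \<Longrightarrow> \<sigma> \<in> W0 r U \<Longrightarrow> \<sigma> \<circ> \<tau> \<in> W0 r U"
proof (induction \<tau> rule: W0.induct)
  case W0_id then show ?case by simp
next
  case (W0_step \<tau> k)
  have "(\<sigma> \<circ> \<tau>) \<circ> gamma k \<in> W0 r U"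
    by (rule W0.W0_step[OF W0_step.IH[OF W0_step.prems] W0_step.hyps(2)])
  then show ?case by (metis comp_assoc)
qed

lemma gamma_W0: "k \<in> Gamma0 r U \<Longrightarrow> gamma k \<in> W0 r U"
  using W0.W0_step[OF W0.W0_id, of k r U] by simp

lemma W0_WK: "\<sigma> \<in> W0 r U \<Longrightarrow> \<sigma> permutes {..<r}"
proof (induction \<sigma> rule: W0.induct)
  case W0_id then show ?case by (simp add: permutes_def)
next
  case (W0_step \<sigma> k)
  have "gamma k permutes {..<r}" using W0_step unfolding gamma_def Gamma0_def
    by (intro permutes_swap_id) auto
  then show ?case using W0_step permutes_compose by blast
qed

lemma transp_W0:
  assumes "\<And>k. a \<le> k \<Longrightarrow> k < b \<Longrightarrow> k \<in> Gamma0 r U" "a < b"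
  shows "Transposition.transpose a b \<in> W0 r U"
  using assms
proof (induction "b - a" arbitrary: a)
  case 0 then show ?case by simp
next
  case (Suc d)
  show ?case
  proof (cases "Suc a = b")
    case True
    then show ?thesis using gamma_W0[of a r U] Suc.prems unfolding gamma_def by auto
  next
    case False
    then have ab: "Suc a < b" using Suc by simp
    have t1: "Transposition.transpose (Suc a) b \<in> W0 r U"
      using Suc ab by (intro Suc.hyps) auto
    have g: "gamma a \<in> W0 r U" using gamma_W0 Suc.prems ab by auto
    have eq: "Transposition.transpose a b = gamma a \<circ> Transposition.transpose (Suc a) b \<circ> gamma a"
      using ab unfolding gamma_def by (auto simp: Transposition.transpose_def fun_eq_iff)
    show ?thesis unfolding eq using W0_comp t1 g by blast
  qed
qed

lemma transp_W0':
  assumes p: "p \<in> Ch r" and T: "\<And>k. Suc k < r \<Longrightarrow> p k = p (Suc k) \<Longrightarrow> k \<in> Gamma0 r U"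
    and ab: "a < b" "b < r" "p a = p b"
  shows "Transposition.transpose a b \<in> W0 r U"
proof (rule transp_W0[OF _ ab(1)])
  fix k assume k: "a \<le> k" "k < b"
  have "p k \<le> p a" using Ch_mono[OF p k(1)] k ab by simp
  moreover have "p (Suc k) \<le> p k" using Ch_mono[OF p, of k "Suc k"] k ab by simp
  moreover have "p b \<le> p (Suc k)" using Ch_mono[OF p, of "Suc k" b] k ab by simp
  ultimately have "p k = p (Suc k)" using ab by simp
  then show "k \<in> Gamma0 r U" using T k ab by simp
qed

lemma stab_W0:
  assumes p: "p \<in> Ch r" and T: "\<And>k. Suc k < r \<Longrightarrow> p k = p (Suc k) \<Longrightarrow> k \<in> Gamma0 r U"
    and tau: "\<tau> permutes {..<r}" and fx: "\<And>i. i < r \<Longrightarrow> p (\<tau> i) = p i"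
  shows "\<tau> \<in> W0 r U"
proof -
  have "\<forall>\<tau>. \<tau> permutes S \<longrightarrow> (\<forall>i<r. p (\<tau> i) = p i) \<longrightarrow> \<tau> \<in> W0 r U"
    if "finite S" "S \<subseteq> {..<r}" for S
    using that
  proof (induction S rule: finite_induct)
    case empty
    then show ?case using W0.W0_id[of r U] by (auto simp: id_def)
  next
    case (insert x F)
    show ?case
    proof (intro allI impI)
      fix \<tau> assume t: "\<tau> permutes insert x F" and f: "\<forall>i<r. p (\<tau> i) = p i"
      define \<rho> where "\<rho> = Transposition.transpose x (\<tau> x) \<circ> \<tau>"
      have rho: "\<rho> permutes F" unfolding \<rho>_def by (rule permutes_insert_lemma[OF t])
      have xr: "x < r" using insert by auto
      have "\<tau> x \<in> insert x F" using permutes_in_image[OF t] by simp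
      then have txr: "\<tau> x < r" using insert xr by auto
      have ptx: "p (\<tau> x) = p x" using f xr by auto
      have frho: "\<forall>i<r. p (\<rho> i) = p i"
      proof (intro allI impI)
        fix i assume i: "i < r"
        show "p (\<rho> i) = p i"
        proof (cases "\<tau> i = x")
          case True then show ?thesis using ptx f i unfolding \<rho>_def by auto
        next
          case False
          show ?thesis
          proof (cases "\<tau> i = \<tau> x")
            case True
            then have "i = x" using permutes_inj[OF t] by (auto dest: injD)
            then show ?thesis unfolding \<rho>_def by simp
          next
            case False2: False
            then show ?thesis using False f i unfolding \<rho>_def by simp
          qed
        qed
      qed
      have rW: "\<rho> \<in> W0 r U" using insert.IH insert.prems rho frho by auto
      have tW: "Transposition.transpose x (\<tau> x) \<in> W0 r U"
      proof (cases "x = \<tau> x")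
        case True then show ?thesis using W0.W0_id by (simp add: transpose_eq_id_iff)
      next
        case False
        show ?thesis
        proof (cases "x < \<tau> x")
          case True then show ?thesis using transp_W0'[OF p T] txr ptx by auto
        next
          case False2: False
          then have "\<tau> x < x" using False by simp
          then show ?thesis using transp_W0'[OF p T, of "\<tau> x" x] xr ptx
            by (simp add: transpose_commute)
        qed
      qed
      have "\<tau> = Transposition.transpose x (\<tau> x) \<circ> \<rho>"
        unfolding \<rho>_def by (simp add: comp_assoc[symmetric])
      then show "\<tau> \<in> W0 r U" using W0_comp[OF rW tW] by simp
    qed
  qed
  then show ?thesis using tau fx by auto
qed

lemma sort_exists:
  assumes y: "y \<in> Lambda_corner r"
  shows "\<exists>w. w permutes {..<r} \<and> y \<circ> w \<in> Ch r"
proof -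
  define L where "L = map y [0..<r]"
  define xs where "xs = rev (sort L)"
  have "mset xs = mset L" unfolding xs_def by simp
  then obtain w where w: "w permutes {..<length L}" "permute_list w L = xs"
    by (rule mset_eq_permutation)
  have lL: "length L = r" "length xs = r" unfolding L_def xs_def by auto
  have wr: "\<And>i. i < r \<Longrightarrow> w i < r" using permutes_in_image[OF w(1)] lL by auto
  have xsi: "\<And>i. i < r \<Longrightarrow> xs ! i = y (w i)"
  proof -
    fix i assume i: "i < r"
    have "xs ! i = L ! w i" using w permute_list_nth[OF w(1)] i lL by metis
    then show "xs ! i = y (w i)" using wr[OF i] unfolding L_def by simp
  qed
  have srt: "sorted (sort L)" by simp
  have "y \<circ> w \<in> Ch r"
    unfolding Ch_def
  proof (intro CollectI conjI allI impI)
    fix j assume j: "Suc j < r"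
    have "xs ! Suc j = sort L ! (r - 1 - Suc j)" "xs ! j = sort L ! (r - 1 - j)"
      unfolding xs_def using j lL by (auto simp: rev_nth)
    moreover have "sort L ! (r - 1 - Suc j) \<le> sort L ! (r - 1 - j)"
      using sorted_nth_mono[OF srt, of "r - 1 - Suc j" "r - 1 - j"] j lL by simp
    ultimately show "(y \<circ> w) (Suc j) \<le> (y \<circ> w) j" using xsi j by simp
  next
    fix j assume j: "j < r"
    then show "0 \<le> (y \<circ> w) j" using y wr[OF j] unfolding Lambda_corner_def by auto
  qed
  then show ?thesis using w lL by auto
qed

lemma Wact_inv: "w permutes S \<Longrightarrow> Wact (inv w) y = y \<circ> w"
  unfolding Wact_def using permutes_bij inv_inv_eq by metis

lemma Wact_comp: "bij \<sigma> \<Longrightarrow> bij \<tau> \<Longrightarrow> Wact (\<sigma> \<circ> \<tau>) x = Wact \<sigma> (Wact \<tau> x)"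
  unfolding Wact_def by (simp add: o_inv_distrib comp_assoc)

lemma Wact_gamma: "Wact (gamma k) x = x \<circ> gamma k"
  unfolding Wact_def gamma_def by simp

lemma cont_Wact: "continuous_on S (Wact f)"
  unfolding Wact_def o_def
  by (intro continuous_on_coordinatewise_then_product continuous_on_subset[OF continuous_on_product_coordinates]) auto

lemma closed_F: "closed {y :: nat \<Rightarrow> real. y \<circ> w \<in> Ch r}"
proof -
  have "{y :: nat \<Rightarrow> real. y \<circ> w \<in> Ch r} =
    {y. \<forall>j. (Suc j < r \<longrightarrow> y (w (Suc j)) \<le> y (w j)) \<and> (j < r \<longrightarrow> 0 \<le> y (w j))}"
    unfolding Ch_def by auto
  also have "closed \<dots>"
    by (intro closed_Collect_all closed_Collect_conj closed_Collect_imp closed_Collect_le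
        continuous_on_product_coordinates continuous_on_const) auto
  finally show ?thesis .
qed

lemma zero_case:
  assumes open_U: "openin (top_of_set (Lambda_corner r)) U"
    and z: "(\<lambda>i. 0) \<in> U" and tau: "\<tau> permutes {..<r}"
  shows "\<tau> \<in> W0 r U"
proof (cases "r = 0")
  case True
  then have "\<tau> = id" using tau by simp
  then show ?thesis using W0.W0_id by simp
next
  case False
  obtain Ov where Ov: "open Ov" "U = Lambda_corner r \<inter> Ov" using open_U openin_open by metis
  define d where "d = (\<lambda>(t::real) (i::nat). if i < r then t else 0)"
  have cd: "continuous_on UNIV d"
    unfolding d_def
    apply (intro continuous_on_coordinatewise_then_product)
    subgoal for i by (cases "i < r") auto
    done
  have "open (d -` Ov)" using open_vimage[OF Ov(1) cd] .
  moreover have "0 \<in> d -` Ov" using z Ov unfolding d_def by (auto simp: fun_eq_iff)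
  ultimately obtain e where e: "e > 0" "ball 0 e \<subseteq> d -` Ov" using open_contains_ball by blast
  define t where "t = e / 2"
  have t: "t > 0" "t \<in> ball 0 e" using e unfolding t_def by auto
  have dtO: "d t \<in> Ov" using t(2) e(2) by blast
  have dtC: "d t \<in> Lambda_corner r" using t unfolding d_def Lambda_corner_def by auto
  have dtU: "d t \<in> U" using dtO dtC Ov by auto
  have dtCh: "d t \<in> Ch r" using t unfolding d_def Ch_def by auto
  have dtP: "d t \<in> plus_part r U" using dtU dtCh plus_part_Ch by auto
  have T: "k \<in> Gamma0 r U" if "Suc k < r" for k
  proof -
    have "Wact (gamma k) (d t) = d t"
      unfolding Wact_gamma using that
      by (auto simp: fun_eq_iff d_def gamma_def Transposition.transpose_def)
    moreover have "\<exists>j<r. d t j \<noteq> 0" using False t unfolding d_def by auto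
    ultimately show ?thesis unfolding Gamma0_def using dtP that by blast
  qed
  show ?thesis
  proof (rule stab_W0[OF dtCh])
    show "\<And>k. Suc k < r \<Longrightarrow> d t k = d t (Suc k) \<Longrightarrow> k \<in> Gamma0 r U" using T by blast
    show "\<tau> permutes {..<r}" by (rule tau)
    show "\<And>i. i < r \<Longrightarrow> d t (\<tau> i) = d t i"
      using permutes_in_image[OF tau] unfolding d_def by auto
  qed
qed

theorem lemma4p9:
  fixes r :: nat and U :: "(nat \<Rightarrow> real) set"
  assumes sub: "U \<subseteq> Lambda_corner r"
    and open_U: "openin (top_of_set (Lambda_corner r)) U"
    and W_inv: "\<And>\<sigma> x. \<sigma> \<in> WK r \<Longrightarrow> x \<in> U \<Longrightarrow> Wact \<sigma> x \<in> U"
    and conn: "connected (plus_part r U)"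
    and x0: "x0 \<in> plus_part r U"
  shows "{Wact w x | w x. w \<in> W0 r U \<and> x \<in> plus_part r U} = connected_component_set U x0"
proof -
  define P where "P = plus_part r U"
  define K where "K = connected_component_set U x0"
  have PU: "P \<subseteq> U" unfolding P_def plus_part_def by auto
  have x0U: "x0 \<in> U" using x0 PU P_def by auto
  have x0K: "x0 \<in> K" unfolding K_def using x0U by simp
  have KU: "K \<subseteq> U" unfolding K_def by (rule connected_component_subset)
  have WKp: "\<And>\<sigma>. \<sigma> \<in> WK r \<longleftrightarrow> \<sigma> permutes {..<r}" unfolding WK_def by simp
  have img: "Wact w ` P \<subseteq> K" if "w \<in> W0 r U" for w
    using that
  proof (induction w rule: W0.induct)
    case W0_id
    have "P \<subseteq> K" unfolding K_def
      by (rule connected_component_maximal) (use x0 conn PU P_def in auto)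
    then show ?case unfolding Wact_def by simp
  next
    case (W0_step \<sigma> k)
    obtain x where x: "x \<in> P" "Wact (gamma k) x = x"
      using W0_step.hyps(2) unfolding Gamma0_def P_def by blast
    have sp: "\<sigma> permutes {..<r}" using W0_WK[OF W0_step.hyps(1)] .
    have sgp: "\<sigma> \<circ> gamma k permutes {..<r}"
      using W0_WK[OF W0.W0_step[OF W0_step.hyps]] .
    have gp: "gamma k permutes {..<r}" using W0_step.hyps(2) unfolding gamma_def Gamma0_def
      by (intro permutes_swap_id) auto
    define S where "S = Wact (\<sigma> \<circ> gamma k) ` P"
    have cS: "connected S" unfolding S_def
      using connected_continuous_image[OF cont_Wact] conn P_def by blast
    have SU: "S \<subseteq> U" unfolding S_def using W_inv sgp PU WKp by blast
    have "Wact (\<sigma> \<circ> gamma k) x = Wact \<sigma> x"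
      using Wact_comp[OF permutes_bij[OF sp] permutes_bij[OF gp]] x by simp
    then have xS: "Wact \<sigma> x \<in> S" unfolding S_def using x by force
    have xK: "Wact \<sigma> x \<in> K" using W0_step.IH x by auto
    have "S \<subseteq> connected_component_set U (Wact \<sigma> x)"
      by (rule connected_component_maximal[OF xS cS SU])
    also have "\<dots> = K" unfolding K_def using connected_component_eq xK K_def by blast
    finally show ?case unfolding S_def .
  qed
  have sub1: "{Wact w x | w x. w \<in> W0 r U \<and> x \<in> P} \<subseteq> K" using img by blast
  define F where "F = (\<lambda>w. {y :: nat \<Rightarrow> real. y \<circ> w \<in> Ch r})"
  define FA where "FA = (\<Union>w\<in>W0 r U. F w)"
  define FB where "FB = (\<Union>w\<in>{w. w permutes {..<r}} - W0 r U. F w)"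
  have finW: "finite {w. w permutes {..<r}}" by (rule finite_permutations) simp
  have W0sub: "W0 r U \<subseteq> {w. w permutes {..<r}}" using W0_WK by blast
  have cFA: "closed FA" unfolding FA_def F_def
    using finite_subset[OF W0sub finW] closed_F by (intro closed_UN) auto
  have cFB: "closed FB" unfolding FB_def F_def
    using finW closed_F by (intro closed_UN) auto
  have cover: "K \<subseteq> FA \<union> FB"
  proof
    fix y assume "y \<in> K"
    then have "y \<in> Lambda_corner r" using KU sub by auto
    then obtain w where "w permutes {..<r}" "y \<circ> w \<in> Ch r" using sort_exists by blast
    then show "y \<in> FA \<union> FB" unfolding FA_def FB_def F_def by (cases "w \<in> W0 r U") auto
  qed
  have disj: "FA \<inter> FB \<inter> K = {}"
  proof (rule ccontr)
    assume "FA \<inter> FB \<inter> K \<noteq> {}"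
    then obtain y w1 w2 where y: "y \<in> U" and w1: "w1 \<in> W0 r U" "y \<circ> w1 \<in> Ch r"
      and w2: "w2 permutes {..<r}" "w2 \<notin> W0 r U" "y \<circ> w2 \<in> Ch r"
      unfolding FA_def FB_def F_def using KU by blast
    have w1p: "w1 permutes {..<r}" using W0_WK[OF w1(1)] .
    define p where "p = y \<circ> w1"
    define q where "q = y \<circ> w2"
    have pU: "p \<in> U" unfolding p_def
      using W_inv[of "inv w1" y] Wact_inv[OF w1p] permutes_inv[OF w1p] WKp y by auto
    have pP: "p \<in> plus_part r U" using pU w1 p_def plus_part_Ch by auto
    define \<tau> where "\<tau> = inv w1 \<circ> w2"
    have tau: "\<tau> permutes {..<r}" unfolding \<tau>_def
      by (rule permutes_compose[OF w2(1) permutes_inv[OF w1p]])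
    have qp: "\<And>i. i < r \<Longrightarrow> q i = p (\<tau> i)"
      unfolding p_def q_def \<tau>_def by (simp add: permutes_inverses(1)[OF w1p])
    have peq: "\<And>i. i < r \<Longrightarrow> p i = q i"
      using sort_unique[of p r q \<tau>, OF _ _ tau qp] w1 w2 p_def q_def by blast
    have pfix: "\<And>i. i < r \<Longrightarrow> p (\<tau> i) = p i" using peq qp by simp
    have w2eq: "w2 = w1 \<circ> \<tau>"
      unfolding \<tau>_def by (simp add: fun_eq_iff permutes_inverses(1)[OF w1p])
    have "\<tau> \<in> W0 r U"
    proof (cases "\<exists>j<r. p j \<noteq> 0")
      case True
      show ?thesis
      proof (rule stab_W0[of p r U \<tau>, OF _ _ tau pfix])
        show "p \<in> Ch r" using w1 p_def by simp
        fix k assume k: "Suc k < r" "p k = p (Suc k)"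
        have "Wact (gamma k) p = p" unfolding Wact_gamma using k
          by (auto simp: fun_eq_iff gamma_def Transposition.transpose_def)
        then show "k \<in> Gamma0 r U" unfolding Gamma0_def using k pP True by blast
      qed
    next
      case False
      have "p = (\<lambda>i. 0)"
      proof
        fix i show "p i = 0"
        proof (cases "i < r")
          case True then show ?thesis using False by auto
        next
          case False
          then have "w1 i = i" using permutes_not_in[OF w1p] by auto
          then show ?thesis using y sub False unfolding p_def Lambda_corner_def by auto
        qed
      qed
      then show ?thesis using zero_case[OF open_U _ tau] pU by simp
    qed
    then have "w2 \<in> W0 r U" using W0_comp[OF _ w1(1)] w2eq by simp
    then show False using w2 by simp
  qed
  have "FA \<inter> K \<noteq> {}"
  proof -
    have "x0 \<in> FA" unfolding FA_def F_def using W0.W0_id x0 plus_part_Ch by fastforce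
    then show ?thesis using x0K by auto
  qed
  then have "FB \<inter> K = {}"
    using connected_closed[of K] cFA cFB cover disj unfolding K_def by auto
  then have KFA: "K \<subseteq> FA" using cover by auto
  have sub2: "K \<subseteq> {Wact w x | w x. w \<in> W0 r U \<and> x \<in> P}"
  proof
    fix y assume yK: "y \<in> K"
    then obtain w where w: "w \<in> W0 r U" "y \<circ> w \<in> Ch r" using KFA unfolding FA_def F_def by auto
    have wp: "w permutes {..<r}" using W0_WK[OF w(1)] .
    have "y \<circ> w \<in> U" using W_inv[of "inv w" y] Wact_inv[OF wp] permutes_inv[OF wp] WKp yK KU by auto
    then have "y \<circ> w \<in> P" using w P_def plus_part_Ch by auto
    moreover have "Wact w (y \<circ> w) = y"
      unfolding Wact_def by (simp add: fun_eq_iff permutes_inverses(1)[OF wp])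
    ultimately show "y \<in> {Wact w x | w x. w \<in> W0 r U \<and> x \<in> P}" using w by force
  qed
  show ?thesis using sub1 sub2 unfolding P_def K_def by blast
qed

end
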